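(* Let $\mu$ be a fuzzy subset of a fuzzy $\Gamma$-hypersemigroup $(M,\circ)$ and let $\nu$ be a fuzzy $\Gamma$-hyper bi-ideal of $(M,\circ)$. Then for every $\gamma\in\Gamma$, both $\mu\circ\gamma\circ\nu$ and $\nu\circ\gamma\circ\mu$ are fuzzy $\Gamma$-hyper bi-ideals of $(M,\circ)$.
   Context: $M,\Gamma$ are nonempty sets; a fuzzy subset of $M$ is a map $M\to[0,1]$. A fuzzy $\Gamma$-hyperoperation assigns to each $(a,\gamma,b)\in M\times\Gamma\times M$ a fuzzy subset $a\circ\gamma\circ b$. For $a\in M$ and fuzzy $\mu$: $(a\circ\gamma\circ\mu)(r)=\bigvee_{t\in M}((a\circ\gamma\circ t)(r)\wedge\mu(t))$ if $\mu\ne0$, else $0$; $(\mu\circ\gamma\circ a)(r)=\bigvee_{t\in M}(\mu(t)\wedge(t\circ\gamma\circ a)(r))$ if $\mu\ne0$, else $0$. For fuzzy $\mu,\nu$: $(\mu\circ\gamma\circ\nu)(t)=\bigvee_{p,q\in M}(\mu(p)\wedge(p\circ\gamma\circ q)(t)\wedge\nu(q))$. $(M,\circ)$ is a fuzzy $\Gamma$-hypersemigroup if $(a\circ\alpha\circ b)\circ\beta\circ c=a\circ\alpha\circ(b\circ\beta\circ c)$ for all $a,b,c\in M$, $\alpha,\beta\in\Gamma$. For fuzzy sets, $\mu\subseteq\nu$ means $\mu(x)\le\nu(x)$ for all $x$. A fuzzy sub $\Gamma$-hypersemigroup is a fuzzy subset $\mu$ with $\mu\circ\gamma\circ\mu\subseteq\mu$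 for all $\gamma\in\Gamma$. A fuzzy $\Gamma$-hyper bi-ideal is a fuzzy sub $\Gamma$-hypersemigroup $\mu$ with $(\mu\circ\alpha\circ y)\circ\beta\circ\mu\subseteq\mu$ for all $y\in M$, $\alpha,\beta\in\Gamma$. *)

theory Defs
  imports Main "HOL.Real"
begin

text \<open>M and Gamma are modelled as (nonempty) types 'm and 'g. A fuzzy subset of M
is a real-valued function with values in [0,1]; suprema are real suprema (SUP),
which are well defined since all values involved lie in [0,1].\<close>

definition fuzzy :: "('m \<Rightarrow> real) \<Rightarrow> bool" where
  "fuzzy \<mu> \<longleftrightarrow> (\<forall>x. 0 \<le> \<mu> x \<and> \<mu> x \<le> 1)"

type_synonym ('m, 'g) fhop = "'m \<Rightarrow> 'g \<Rightarrow> 'm \<Rightarrow> ('m \<Rightarrow> real)"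

definition fuzzy_hyperop :: "('m, 'g) fhop \<Rightarrow> bool" where
  "fuzzy_hyperop hop \<longleftrightarrow> (\<forall>a g b. fuzzy (hop a g b))"

definition elem_fz :: "('m, 'g) fhop \<Rightarrow> 'm \<Rightarrow> 'g \<Rightarrow> ('m \<Rightarrow> real) \<Rightarrow> ('m \<Rightarrow> real)" where
  "elem_fz hop a \<gamma> \<mu> =
     (if \<mu> = (\<lambda>_. 0) then (\<lambda>_. 0) else (\<lambda>r. SUP t. min (hop a \<gamma> t r) (\<mu> t)))"

definition fz_elem :: "('m, 'g) fhop \<Rightarrow> ('m \<Rightarrow> real) \<Rightarrow> 'g \<Rightarrow> 'm \<Rightarrow> ('m \<Rightarrow> real)" where
  "fz_elem hop \<mu> \<gamma> a =
     (if \<mu> = (\<lambda>_. 0) then (\<lambda>_. 0) else (\<lambda>r. SUP t. min (\<mu> t) (hop t \<gamma> a r)))"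

definition fz_fz :: "('m, 'g) fhop \<Rightarrow> ('m \<Rightarrow> real) \<Rightarrow> 'g \<Rightarrow> ('m \<Rightarrow> real) \<Rightarrow> ('m \<Rightarrow> real)" where
  "fz_fz hop \<mu> \<gamma> \<nu> = (\<lambda>t. SUP pq. min (min (\<mu> (fst pq)) (hop (fst pq) \<gamma> (snd pq) t)) (\<nu> (snd pq)))"

definition fuzzy_subset_le :: "('m \<Rightarrow> real) \<Rightarrow> ('m \<Rightarrow> real) \<Rightarrow> bool" where
  "fuzzy_subset_le \<mu> \<nu> \<longleftrightarrow> (\<forall>x. \<mu> x \<le> \<nu> x)"

definition fuzzy_Gamma_hypersemigroup :: "('m, 'g) fhop \<Rightarrow> bool" where
  "fuzzy_Gamma_hypersemigroup hop \<longleftrightarrow> fuzzy_hyperop hop \<and>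
     (\<forall>a b c \<alpha> \<beta>. fz_elem hop (hop a \<alpha> b) \<beta> c = elem_fz hop a \<alpha> (hop b \<beta> c))"

definition fuzzy_sub_Gamma_hypersemigroup :: "('m, 'g) fhop \<Rightarrow> ('m \<Rightarrow> real) \<Rightarrow> bool" where
  "fuzzy_sub_Gamma_hypersemigroup hop \<mu> \<longleftrightarrow> fuzzy \<mu> \<and>
     (\<forall>\<gamma>. fuzzy_subset_le (fz_fz hop \<mu> \<gamma> \<mu>) \<mu>)"

definition fuzzy_Gamma_hyper_bi_ideal :: "('m, 'g) fhop \<Rightarrow> ('m \<Rightarrow> real) \<Rightarrow> bool" where
  "fuzzy_Gamma_hyper_bi_ideal hop \<mu> \<longleftrightarrow> fuzzy_sub_Gamma_hypersemigroup hop \<mu> \<and>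
     (\<forall>y \<alpha> \<beta>. fuzzy_subset_le (fz_fz hop (fz_elem hop \<mu> \<alpha> y) \<beta> \<mu>) \<mu>)"

end

theory Submission
  imports Defs
begin

lemma sup_le: "(\<And>i. f i \<le> c) \<Longrightarrow> (SUP i. f i) \<le> (c::real)"
  by (rule cSUP_least) auto

lemma le_sup: "(\<And>i. f i \<le> B) \<Longrightarrow> x \<le> f i \<Longrightarrow> x \<le> (SUP i. f i::real)"
  by (meson bdd_aboveI2 cSUP_upper2 UNIV_I)

lemma min_sup_le2:
  assumes "\<And>i. min (f i) a \<le> (c::real)"
  shows "min (SUP i. f i) a \<le> c"
proof (rule ccontr)
  assume "\<not> ?thesis"
  hence c: "c < min (SUP i. f i) a" by linarith
  have "\<And>i. f i \<le> c"
  proof -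
    fix i
    have "min (f i) a \<le> c" by (rule assms)
    with c show "f i \<le> c" by (auto simp: min_def split: if_splits)
  qed
  hence "(SUP i. f i) \<le> c" by (rule sup_le)
  with c show False by simp
qed

lemma fz_fz_ge0: "fuzzy_hyperop h \<Longrightarrow> fuzzy A \<Longrightarrow> fuzzy B \<Longrightarrow> 0 \<le> fz_fz h A g B t"
  unfolding fz_fz_def
  apply (rule le_sup[where B=1 and i=undefined])
  by (auto simp: fuzzy_hyperop_def fuzzy_def min_le_iff_disj)

lemma fuzzy_fz_fz: "fuzzy_hyperop h \<Longrightarrow> fuzzy A \<Longrightarrow> fuzzy B \<Longrightarrow> fuzzy (fz_fz h A g B)"
  apply (subst fuzzy_def, intro allI conjI)
   apply (rule fz_fz_ge0, assumption+)
  unfolding fz_fz_def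
  apply (rule sup_le)
  by (auto simp: fuzzy_def min_le_iff_disj)

lemma fz_elem_eq:
  assumes "fuzzy_hyperop h" "\<And>x. 0 \<le> A x"
  shows "fz_elem h A g a r = (SUP t. min (A t) (h t g a r))"
proof (cases "A = (\<lambda>_. 0)")
  case True
  have "\<And>t. min (A t) (h t g a r) = 0" using assms True
    by (auto simp: fuzzy_hyperop_def fuzzy_def min_def)
  then show ?thesis using True by (simp add: fz_elem_def)
next
  case False
  then show ?thesis by (simp add: fz_elem_def)
qed

lemma fz_elem_le1:
  assumes "fuzzy_hyperop h" "fuzzy A"
  shows "fz_elem h A g a r \<le> 1"
  using assms unfolding fz_elem_eq[OF assms(1) assms(2)[unfolded fuzzy_def, rule_format, THEN conjunct1]]
  by (intro sup_le) (auto simp: fuzzy_def min_le_iff_disj)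

definition dlt :: "'m \<Rightarrow> 'm \<Rightarrow> real" where "dlt y = (\<lambda>x. if x = y then 1 else 0)"

lemma fuzzy_dlt: "fuzzy (dlt y)" by (simp add: fuzzy_def dlt_def)

lemma fz_elem_dlt:
  assumes h: "fuzzy_hyperop h" and A: "fuzzy A"
  shows "fz_elem h A g y = fz_fz h A g (dlt y)"
proof
  fix t
  have A0: "\<And>x. 0 \<le> A x" "\<And>x. A x \<le> 1" using A by (auto simp: fuzzy_def)
  have h0: "\<And>a g b x. 0 \<le> h a g b x" "\<And>a g b x. h a g b x \<le> 1" using h by (auto simp: fuzzy_hyperop_def fuzzy_def)
  have "(SUP p. min (A p) (h p g y t)) \<le> fz_fz h A g (dlt y) t"
    unfolding fz_fz_def
  proof (rule sup_le)
    fix p show "min (A p) (h p g y t) \<le> (SUP pq. min (min (A (fst pq)) (h (fst pq) g (snd pq) t)) (dlt y (snd pq)))"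
      by (rule le_sup[where B=1 and i="(p,y)"]) (auto simp: A0 dlt_def min_le_iff_disj)
  qed
  moreover have "fz_fz h A g (dlt y) t \<le> (SUP p. min (A p) (h p g y t))"
    unfolding fz_fz_def
  proof (rule sup_le)
    fix pq :: "'a \<times> 'a"
    obtain p q where pq: "pq = (p,q)" by (cases pq)
    show "min (min (A (fst pq)) (h (fst pq) g (snd pq) t)) (dlt y (snd pq)) \<le> (SUP p. min (A p) (h p g y t))"
    proof (cases "q = y")
      case True
      then show ?thesis using pq
        by (intro le_sup[where B=1 and i=p]) (auto simp: A0 dlt_def min_le_iff_disj)
    next
      case False
      have "0 \<le> (SUP p. min (A p) (h p g y t))"
        by (rule le_sup[where B=1 and i=undefined]) (auto simp: A0 h0 min_le_iff_disj)
      then show ?thesis using pq False by (auto simp: dlt_def min_def)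
    qed
  qed
  ultimately show "fz_elem h A g y t = fz_fz h A g (dlt y) t"
    using fz_elem_eq[OF h A0(1)] by simp
qed

lemma mono2:
  assumes h: "fuzzy_hyperop h" and "fuzzy A" "fuzzy B'" and le: "\<And>x. B x \<le> B' x"
  shows "fz_fz h A g B t \<le> fz_fz h A g B' t"
  unfolding fz_fz_def
proof (rule sup_le)
  fix pq :: "'a \<times> 'a"
  show "min (min (A (fst pq)) (h (fst pq) g (snd pq) t)) (B (snd pq))
    \<le> (SUP pq. min (min (A (fst pq)) (h (fst pq) g (snd pq) t)) (B' (snd pq)))"
    apply (rule le_sup[where B=1 and i=pq])
    using assms le[of "snd pq"] by (auto simp: fuzzy_def min_le_iff_disj min.bounded_iff)
qed

lemma mono1:
  assumes h: "fuzzy_hyperop h" and "fuzzy A'" "fuzzy B" and le: "\<And>x. A x \<le> A' x"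
  shows "fz_fz h A g B t \<le> fz_fz h A' g B t"
  unfolding fz_fz_def
proof (rule sup_le)
  fix pq :: "'a \<times> 'a"
  show "min (min (A (fst pq)) (h (fst pq) g (snd pq) t)) (B (snd pq))
    \<le> (SUP pq. min (min (A' (fst pq)) (h (fst pq) g (snd pq) t)) (B (snd pq)))"
    apply (rule le_sup[where B=1 and i=pq])
    using assms le[of "fst pq"] by (auto simp: fuzzy_def min_le_iff_disj min.bounded_iff)
qed

lemma assoc_le:
  assumes h: "fuzzy_hyperop h" and A: "fuzzy A" and B: "fuzzy B" and C: "fuzzy C"
    and H: "\<And>a b c s r. min (h a \<alpha> b s) (h s \<beta> c r) \<le> (SUP t. min (h a \<alpha> t r) (h b \<beta> c t))"
  shows "fz_fz h (fz_fz h A \<alpha> B) \<beta> C r \<le> fz_fz h A \<alpha> (fz_fz h B \<beta> C) r"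
proof -
  have A0: "\<And>x. 0 \<le> A x" "\<And>x. A x \<le> 1" using A by (auto simp: fuzzy_def)
  have B0: "\<And>x. 0 \<le> B x" "\<And>x. B x \<le> 1" using B by (auto simp: fuzzy_def)
  have C0: "\<And>x. 0 \<le> C x" "\<And>x. C x \<le> 1" using C by (auto simp: fuzzy_def)
  have h0: "\<And>a g b x. 0 \<le> h a g b x" "\<And>a g b x. h a g b x \<le> 1" using h by (auto simp: fuzzy_hyperop_def fuzzy_def)
  have Y1: "\<And>t. fz_fz h B \<beta> C t \<le> 1" using fuzzy_fz_fz[OF h B C] by (auto simp: fuzzy_def)
  let ?R = "fz_fz h A \<alpha> (fz_fz h B \<beta> C) r"
  have key: "min (min (min (A a) (h a \<alpha> b s)) (B b)) (min (h s \<beta> c r) (C c)) \<le> ?R" for a b c s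
  proof -
    let ?T = "SUP t. min (h a \<alpha> t r) (h b \<beta> c t)"
    have "min (min (min (A a) (B b)) (C c)) ?T \<le> ?R"
    proof -
      have "min (?T) (min (min (A a) (B b)) (C c)) \<le> ?R"
      proof (rule min_sup_le2)
        fix t
        have Yt: "min (min (B b) (h b \<beta> c t)) (C c) \<le> fz_fz h B \<beta> C t"
          unfolding fz_fz_def
          by (rule le_sup[where B=1 and i="(b,c)"]) (auto simp: B0 min_le_iff_disj)
        show "min (min (h a \<alpha> t r) (h b \<beta> c t)) (min (min (A a) (B b)) (C c)) \<le> ?R"
          unfolding fz_fz_def[of h A]
          apply (rule le_sup[where B=1 and i="(a,t)"])
           apply (simp add: A0 min_le_iff_disj)
          apply (simp only: min.bounded_iff, intro conjI)
          subgoal by (simp add: min_le_iff_disj)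
          subgoal by (simp add: min_le_iff_disj)
          subgoal by (simp only: snd_conv, rule order_trans[OF _ Yt]) (simp add: min.bounded_iff min_le_iff_disj)
          done
      qed
      thus ?thesis by (simp add: min.commute)
    qed
    moreover have "min (h a \<alpha> b s) (h s \<beta> c r) \<le> ?T" by (rule H)
    ultimately show ?thesis by (auto simp: min_def split: if_splits)
  qed
  show ?thesis
    unfolding fz_fz_def[of h "fz_fz h A \<alpha> B"]
  proof (rule sup_le)
    fix sc :: "'a \<times> 'a"
    obtain s c where sc: "sc = (s,c)" by (cases sc)
    have "min (fz_fz h A \<alpha> B s) (min (h s \<beta> c r) (C c)) \<le> ?R"
      unfolding fz_fz_def[of h A \<alpha> B]
      apply (rule min_sup_le2)
      subgoal for ab using key[of "fst ab" "snd ab" s c] by simp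
      done
    then show "min (min (fz_fz h A \<alpha> B (fst sc)) (h (fst sc) \<beta> (snd sc) r)) (C (snd sc)) \<le> ?R"
      using sc by (simp add: min.assoc)
  qed
qed

lemma sup_swap: "(SUP x. f (prod.swap x)) = (SUP x. (f x::real))"
proof -
  have "(\<lambda>x. f (prod.swap x)) ` UNIV = f ` (prod.swap ` UNIV)" by (rule image_image[symmetric])
  thus ?thesis by (simp add: surj_swap)
qed

definition rev_hop :: "('m, 'g) fhop \<Rightarrow> ('m, 'g) fhop" where
  "rev_hop h = (\<lambda>a g b. h b g a)"

lemma fz_fz_rev: "fz_fz (rev_hop h) X g Y = fz_fz h Y g X"
proof
  fix t
  have "fz_fz (rev_hop h) X g Y t = (SUP pq. (\<lambda>pq. min (min (Y (fst pq)) (h (fst pq) g (snd pq) t)) (X (snd pq))) (prod.swap pq))"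
    unfolding fz_fz_def rev_hop_def by (simp add: min.commute min.left_commute min.assoc)
  also have "\<dots> = fz_fz h Y g X t"
    unfolding fz_fz_def by (rule sup_swap)
  finally show "fz_fz (rev_hop h) X g Y t = fz_fz h Y g X t" .
qed

lemma assoc_pt:
  assumes "fuzzy_Gamma_hypersemigroup h"
  shows "(SUP t. min (h a \<alpha> b t) (h t \<beta> c r)) = (SUP t. min (h a \<alpha> t r) (h b \<beta> c t))"
proof -
  have h: "fuzzy_hyperop h" and e: "fz_elem h (h a \<alpha> b) \<beta> c = elem_fz h a \<alpha> (h b \<beta> c)"
    using assms by (auto simp: fuzzy_Gamma_hypersemigroup_def)
  have h0: "\<And>a g b x. 0 \<le> h a g b x" using h by (auto simp: fuzzy_hyperop_def fuzzy_def)
  have "fz_elem h (h a \<alpha> b) \<beta> c r = (SUP t. min (h a \<alpha> b t) (h t \<beta> c r))"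
    by (rule fz_elem_eq[OF h h0])
  moreover have "elem_fz h a \<alpha> (h b \<beta> c) r = (SUP t. min (h a \<alpha> t r) (h b \<beta> c t))"
  proof (cases "h b \<beta> c = (\<lambda>_. 0)")
    case True
    have "\<And>t. min (h a \<alpha> t r) (h b \<beta> c t) = 0" using True h0 by (simp add: min.absorb2)
    then show ?thesis using True by (simp add: elem_fz_def)
  next
    case False then show ?thesis by (simp add: elem_fz_def)
  qed
  ultimately show ?thesis using e by metis
qed

lemma assoc:
  assumes hs: "fuzzy_Gamma_hypersemigroup h" and A: "fuzzy A" and B: "fuzzy B" and C: "fuzzy C"
  shows "fz_fz h (fz_fz h A \<alpha> B) \<beta> C = fz_fz h A \<alpha> (fz_fz h B \<beta> C)"
proof
  fix r
  have h: "fuzzy_hyperop h" using hs by (simp add: fuzzy_Gamma_hypersemigroup_def)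
  have h1: "\<And>a g b x. h a g b x \<le> 1" using h by (auto simp: fuzzy_hyperop_def fuzzy_def)
  have hr: "fuzzy_hyperop (rev_hop h)" using h by (simp add: fuzzy_hyperop_def fuzzy_def rev_hop_def)
  have H1: "min (h a \<alpha> b s) (h s \<beta> c r) \<le> (SUP t. min (h a \<alpha> t r) (h b \<beta> c t))" for a b c s r
    unfolding assoc_pt[OF hs, symmetric]
    by (rule le_sup[where B=1 and i=s]) (auto simp: h1 min_le_iff_disj)
  have H2: "min (rev_hop h a \<beta> b s) (rev_hop h s \<alpha> c r) \<le> (SUP t. min (rev_hop h a \<beta> t r) (rev_hop h b \<alpha> c t))" for a b c s r
  proof -
    have "(SUP t. min (h t \<beta> a r) (h c \<alpha> b t)) = (SUP t. min (h c \<alpha> b t) (h t \<beta> a r))"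
      by (simp add: min.commute)
    also have "\<dots> = (SUP t. min (h c \<alpha> t r) (h b \<beta> a t))" by (rule assoc_pt[OF hs])
    finally have e: "(SUP t. min (h t \<beta> a r) (h c \<alpha> b t)) = (SUP t. min (h c \<alpha> t r) (h b \<beta> a t))" .
    show ?thesis unfolding rev_hop_def e
      by (rule le_sup[where B=1 and i=s]) (auto simp: h1 min_le_iff_disj min.commute)
  qed
  have "fz_fz h (fz_fz h A \<alpha> B) \<beta> C r \<le> fz_fz h A \<alpha> (fz_fz h B \<beta> C) r"
    by (rule assoc_le[OF h A B C H1])
  moreover have "fz_fz (rev_hop h) (fz_fz (rev_hop h) C \<beta> B) \<alpha> A r \<le> fz_fz (rev_hop h) C \<beta> (fz_fz (rev_hop h) B \<alpha> A) r"
    by (rule assoc_le[OF hr C B A H2])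
  ultimately show "fz_fz h (fz_fz h A \<alpha> B) \<beta> C r = fz_fz h A \<alpha> (fz_fz h B \<beta> C) r"
    by (simp add: fz_fz_rev)
qed


lemma K:
  assumes h: "fuzzy_hyperop h" and bi: "fuzzy_Gamma_hyper_bi_ideal h \<nu>" and L: "fuzzy lam"
  shows "fz_fz h (fz_fz h \<nu> \<gamma> lam) \<beta> \<nu> r \<le> \<nu> r"
proof -
  have nu: "fuzzy \<nu>" using bi by (simp add: fuzzy_Gamma_hyper_bi_ideal_def fuzzy_sub_Gamma_hypersemigroup_def)
  have N0: "\<And>x. 0 \<le> \<nu> x" "\<And>x. \<nu> x \<le> 1" using nu by (auto simp: fuzzy_def)
  have h0: "\<And>a g b x. 0 \<le> h a g b x" "\<And>a g b x. h a g b x \<le> 1" using h by (auto simp: fuzzy_hyperop_def fuzzy_def)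
  have biz: "\<And>z x. fz_fz h (fz_elem h \<nu> \<gamma> z) \<beta> \<nu> x \<le> \<nu> x"
    using bi by (auto simp: fuzzy_Gamma_hyper_bi_ideal_def fuzzy_subset_le_def)
  have key: "min (min (min (\<nu> p) (h p \<gamma> z s)) (lam z)) (min (h s \<beta> q r) (\<nu> q)) \<le> \<nu> r" for p z s q
  proof -
    have E: "fz_elem h \<nu> \<gamma> z s = (SUP p. min (\<nu> p) (h p \<gamma> z s))" by (rule fz_elem_eq[OF h N0(1)])
    have "min (\<nu> p) (h p \<gamma> z s) \<le> fz_elem h \<nu> \<gamma> z s"
      unfolding E by (rule le_sup[where B=1 and i=p]) (auto simp: N0 min_le_iff_disj)
    moreover have "min (min (fz_elem h \<nu> \<gamma> z s) (h s \<beta> q r)) (\<nu> q) \<le> fz_fz h (fz_elem h \<nu> \<gamma> z) \<beta> \<nu> r"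
      unfolding fz_fz_def
      by (rule le_sup[where B=1 and i="(s,q)"]) (auto simp: N0 min_le_iff_disj)
    ultimately have "min (min (min (\<nu> p) (h p \<gamma> z s)) (h s \<beta> q r)) (\<nu> q) \<le> \<nu> r"
      using biz[of z r] by (smt (verit) min_def)
    thus ?thesis by (smt (verit) min_def)
  qed
  show ?thesis
    unfolding fz_fz_def[of h "fz_fz h \<nu> \<gamma> lam"]
  proof (rule sup_le)
    fix sq :: "'a \<times> 'a"
    obtain s q where sq: "sq = (s,q)" by (cases sq)
    have "min (fz_fz h \<nu> \<gamma> lam s) (min (h s \<beta> q r) (\<nu> q)) \<le> \<nu> r"
      unfolding fz_fz_def[of h \<nu>]
      apply (rule min_sup_le2)
      subgoal for pz using key[of "fst pz" "snd pz" s q] by simp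
      done
    then show "min (min (fz_fz h \<nu> \<gamma> lam (fst sq)) (h (fst sq) \<beta> (snd sq) r)) (\<nu> (snd sq)) \<le> \<nu> r"
      using sq by (simp add: min.assoc)
  qed
qed

theorem theorem4p14:
  fixes hop :: "('m, 'g) fhop" and \<mu> \<nu> :: "'m \<Rightarrow> real"
  assumes "fuzzy_Gamma_hypersemigroup hop"
    and "fuzzy \<mu>"
    and "fuzzy_Gamma_hyper_bi_ideal hop \<nu>"
  shows "\<forall>\<gamma>. fuzzy_Gamma_hyper_bi_ideal hop (fz_fz hop \<mu> \<gamma> \<nu>) \<and>
              fuzzy_Gamma_hyper_bi_ideal hop (fz_fz hop \<nu> \<gamma> \<mu>)"
proof
  fix \<gamma>
  note hs = assms(1) and mu = assms(2) and bi = assms(3)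
  have h: "fuzzy_hyperop hop" using hs by (simp add: fuzzy_Gamma_hypersemigroup_def)
  have nu: "fuzzy \<nu>" using bi by (simp add: fuzzy_Gamma_hyper_bi_ideal_def fuzzy_sub_Gamma_hypersemigroup_def)
  note F = fuzzy_fz_fz[OF h] fuzzy_dlt
  note As = assoc[OF hs]
  define P where "P = fz_fz hop \<mu> \<gamma> \<nu>"
  define Q where "Q = fz_fz hop \<nu> \<gamma> \<mu>"
  have FP: "fuzzy P" unfolding P_def by (rule F(1)[OF mu nu])
  have FQ: "fuzzy Q" unfolding Q_def by (rule F(1)[OF nu mu])
  have P1: "fz_fz hop P \<delta> P x \<le> P x" for \<delta> x
  proof -
    have "fz_fz hop P \<delta> P = fz_fz hop \<mu> \<gamma> (fz_fz hop (fz_fz hop \<nu> \<delta> \<mu>) \<gamma> \<nu>)"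
      unfolding P_def by (simp add: As F mu nu)
    moreover have "fz_fz hop \<mu> \<gamma> (fz_fz hop (fz_fz hop \<nu> \<delta> \<mu>) \<gamma> \<nu>) x \<le> fz_fz hop \<mu> \<gamma> \<nu> x"
      by (rule mono2[OF h mu nu K[OF h bi mu]])
    ultimately show ?thesis unfolding P_def by simp
  qed
  have P2: "fz_fz hop (fz_elem hop P \<alpha> y) \<beta> P x \<le> P x" for \<alpha> \<beta> y x
  proof -
    have "fz_fz hop (fz_elem hop P \<alpha> y) \<beta> P =
      fz_fz hop \<mu> \<gamma> (fz_fz hop (fz_fz hop \<nu> \<alpha> (fz_fz hop (dlt y) \<beta> \<mu>)) \<gamma> \<nu>)"
      unfolding fz_elem_dlt[OF h FP] unfolding P_def by (simp add: As F mu nu)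
    moreover have "fz_fz hop \<mu> \<gamma> (fz_fz hop (fz_fz hop \<nu> \<alpha> (fz_fz hop (dlt y) \<beta> \<mu>)) \<gamma> \<nu>) x \<le> fz_fz hop \<mu> \<gamma> \<nu> x"
      by (rule mono2[OF h mu nu K[OF h bi F(1)[OF fuzzy_dlt mu]]])
    ultimately show ?thesis unfolding P_def by simp
  qed
  have Q1: "fz_fz hop Q \<delta> Q x \<le> Q x" for \<delta> x
  proof -
    have "fz_fz hop Q \<delta> Q = fz_fz hop (fz_fz hop (fz_fz hop \<nu> \<gamma> \<mu>) \<delta> \<nu>) \<gamma> \<mu>"
      unfolding Q_def by (simp add: As F mu nu)
    moreover have "fz_fz hop (fz_fz hop (fz_fz hop \<nu> \<gamma> \<mu>) \<delta> \<nu>) \<gamma> \<mu> x \<le> fz_fz hop \<nu> \<gamma> \<mu> x"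
      by (rule mono1[OF h nu mu K[OF h bi mu]])
    ultimately show ?thesis unfolding Q_def by simp
  qed
  have Q2: "fz_fz hop (fz_elem hop Q \<alpha> y) \<beta> Q x \<le> Q x" for \<alpha> \<beta> y x
  proof -
    have "fz_fz hop (fz_elem hop Q \<alpha> y) \<beta> Q =
      fz_fz hop (fz_fz hop (fz_fz hop \<nu> \<gamma> (fz_fz hop \<mu> \<alpha> (dlt y))) \<beta> \<nu>) \<gamma> \<mu>"
      unfolding fz_elem_dlt[OF h FQ] unfolding Q_def by (simp add: As F mu nu)
    moreover have "fz_fz hop (fz_fz hop (fz_fz hop \<nu> \<gamma> (fz_fz hop \<mu> \<alpha> (dlt y))) \<beta> \<nu>) \<gamma> \<mu> x \<le> fz_fz hop \<nu> \<gamma> \<mu> x"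
      by (rule mono1[OF h nu mu K[OF h bi F(1)[OF mu fuzzy_dlt]]])
    ultimately show ?thesis unfolding Q_def by simp
  qed
  show "fuzzy_Gamma_hyper_bi_ideal hop (fz_fz hop \<mu> \<gamma> \<nu>) \<and> fuzzy_Gamma_hyper_bi_ideal hop (fz_fz hop \<nu> \<gamma> \<mu>)"
    using FP FQ P1 P2 Q1 Q2 unfolding P_def Q_def
    by (simp add: fuzzy_Gamma_hyper_bi_ideal_def fuzzy_sub_Gamma_hypersemigroup_def fuzzy_subset_le_def)
qed

end
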